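(* Let $\Phi$ be a Young function such that the limits $p_0=\lim_{t\to0^+}\frac{t\Phi'(t)}{\Phi(t)}$ and $p_\infty=\lim_{t\to\infty}\frac{t\Phi'(t)}{\Phi(t)}$ exist as finite real numbers. Then $p_{[\Phi]}=\max\{p_0,p_\infty\}$ and $q_{[\Phi]}=\min\{p_0,p_\infty\}$.
   Context: A Young function is a convex function $\Phi:[0,\infty)\to[0,\infty)$ with $\Phi(0)=0$, $\Phi(t)>0$ for $t>0$, and $\lim_{t\to\infty}\Phi(t)=\infty$. $\Phi'$ denotes the right derivative of $\Phi$. The Lebesgue exponents of $\Phi$ are $p_\Phi=\sup_{t>0}\frac{t\Phi'(t)}{\Phi(t)}$ and $q_\Phi=\inf_{t>0}\frac{t\Phi'(t)}{\Phi(t)}$. Two Young functions $\Phi,\Psi$ are equivalent if there is $C\ge1$ with $C^{-1}\Psi(t)\le\Phi(t)\le C\Psi(t)$ for all $t\ge0$; $[\Phi]$ denotes the set of Young functions equivalent to $\Phi$, and $p_{[\Phi]}=\inf\{p_\Psi:\Psi\in[\Phi]\}$, $q_{[\Phi]}=\sup\{q_\Psi:\Psi\in[\Phi]\}$. *)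

theory Defs
  imports "HOL-Analysis.Analysis"
begin

text \<open>Young functions are modelled as real functions; only their values on [0,oo) matter.\<close>

definition young_function :: "(real \<Rightarrow> real) \<Rightarrow> bool" where
  "young_function \<Phi> \<longleftrightarrow>
     convex_on {0..} \<Phi> \<and> (\<forall>t\<ge>0. \<Phi> t \<ge> 0) \<and> \<Phi> 0 = 0 \<and>
     (\<forall>t>0. \<Phi> t > 0) \<and> filterlim \<Phi> at_top at_top"

definition rderiv :: "(real \<Rightarrow> real) \<Rightarrow> real \<Rightarrow> real" where
  "rderiv \<Phi> t = Lim (at_right 0) (\<lambda>h. (\<Phi> (t + h) - \<Phi> t) / h)"

text \<open>Lebesgue exponents (possibly infinite, hence extended reals).\<close>
definition upper_index :: "(real \<Rightarrow> real) \<Rightarrow> ereal" where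
  "upper_index \<Phi> = (SUP t\<in>{0<..}. ereal (t * rderiv \<Phi> t / \<Phi> t))"

definition lower_index :: "(real \<Rightarrow> real) \<Rightarrow> ereal" where
  "lower_index \<Phi> = (INF t\<in>{0<..}. ereal (t * rderiv \<Phi> t / \<Phi> t))"

definition young_equiv :: "(real \<Rightarrow> real) \<Rightarrow> (real \<Rightarrow> real) \<Rightarrow> bool" where
  "young_equiv \<Phi> \<Psi> \<longleftrightarrow> young_function \<Phi> \<and> young_function \<Psi> \<and>
     (\<exists>C\<ge>1. \<forall>t\<ge>0. \<Psi> t / C \<le> \<Phi> t \<and> \<Phi> t \<le> C * \<Psi> t)"

definition young_class :: "(real \<Rightarrow> real) \<Rightarrow> (real \<Rightarrow> real) set" where
  "young_class \<Phi> = {\<Psi>. young_equiv \<Phi> \<Psi>}"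

definition upper_index_class :: "(real \<Rightarrow> real) \<Rightarrow> ereal" where
  "upper_index_class \<Phi> = (INF \<Psi>\<in>young_class \<Phi>. upper_index \<Psi>)"

definition lower_index_class :: "(real \<Rightarrow> real) \<Rightarrow> ereal" where
  "lower_index_class \<Phi> = (SUP \<Psi>\<in>young_class \<Phi>. lower_index \<Psi>)"

end

theory Submission
  imports Defs
begin

lemma young_mono:
  assumes "young_function F" "0 \<le> s" "s \<le> t"
  shows "F s \<le> F t"
proof (cases "s = t")
  case False
  then have t: "t > 0" using assms by auto
  have cv: "convex_on {0..} F" using assms(1) by (simp add: young_function_def)
  have "F ((1 - s/t) *\<^sub>R 0 + (s/t) *\<^sub>R t) \<le> (1 - s/t) * F 0 + (s/t) * F t"
    by (rule convex_onD[OF cv]) (use assms t in auto)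
  moreover have "(1 - s/t) *\<^sub>R 0 + (s/t) *\<^sub>R t = s" using t by simp
  moreover have "F 0 = 0" "F t \<ge> 0" using assms(1) t by (auto simp: young_function_def)
  ultimately have "F s \<le> (s/t) * F t" by simp
  also have "\<dots> \<le> 1 * F t" using \<open>F t \<ge> 0\<close> assms t by (intro mult_right_mono) auto
  finally show ?thesis by simp
qed simp

lemma young_pos: "young_function F \<Longrightarrow> t > 0 \<Longrightarrow> F t > 0"
  by (simp add: young_function_def)

lemma young_cont:
  assumes "young_function F"
  shows "continuous_on {0<..} F"
proof -
  have "convex_on {0<..} F"
    using assms by (auto simp: young_function_def intro: convex_on_subset)
  then show ?thesis by (intro convex_on_continuous) auto
qed

lemma rderiv_tendsto:
  assumes "young_function F" "r > 0"
  shows "((\<lambda>h. (F (r + h) - F r) / h) \<longlongrightarrow> rderiv F r) (at_right 0)"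
proof -
  have cv: "convex_on {0..} F" using assms(1) by (simp add: young_function_def)
  let ?f = "\<lambda>h. (F (r + h) - F r) / h"
  have mono: "?f a \<le> ?f b" if "a \<in> UNIV" "b \<in> UNIV" "0 < a" "a \<le> b" for a b
  proof (cases "a = b")
    case False
    then have "a < b" using that by simp
    have "(F r - F (r + a)) / (r - (r + a)) \<le> (F r - F (r + b)) / (r - (r + b))"
      by (rule convex_on_slope_le(1)[OF cv]) (use that assms \<open>a < b\<close> in auto)
    moreover have "(F (r + a) - F r) / a = - ((F r - F (r + a)) / a)" "(F (r + b) - F r) / b = - ((F r - F (r + b)) / b)"
      by (simp_all add: minus_divide_left)
    ultimately show ?thesis by simp
  qed simp
  have bnd: "(F r - F 0) / r \<le> ?f a" if "a \<in> UNIV" "0 < a" for a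
  proof -
    have "(F 0 - F r) / (0 - r) \<le> (F 0 - F (r + a)) / (0 - (r + a))"
      by (rule convex_on_slope_le(1)[OF cv]) (use that assms in auto)
    also have "\<dots> \<le> (F r - F (r + a)) / (r - (r + a))"
      by (rule convex_on_slope_le(2)[OF cv]) (use that assms in auto)
    finally have "(F r - F (r + a)) / (r - (r + a)) \<ge> (F 0 - F r) / (0 - r)" .
    moreover have "(F r - F (r + a)) / (r - (r + a)) = (F (r + a) - F r) / a" "(F 0 - F r) / (0 - r) = (F r - F 0) / r"
      using that assms by (simp_all add: field_simps)
    ultimately show ?thesis by simp
  qed
  have "(?f \<longlongrightarrow> Inf (?f ` ({0<..} \<inter> UNIV))) (at 0 within ({0<..} \<inter> UNIV))"
    by (rule Lim_right_bound[OF mono bnd]) auto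
  then have lim: "(?f \<longlongrightarrow> Inf (?f ` ({0<..} \<inter> UNIV))) (at_right 0)" by simp
  then have "rderiv F r = Inf (?f ` ({0<..} \<inter> UNIV))"
    unfolding rderiv_def by (intro tendsto_Lim) auto
  with lim show ?thesis by simp
qed

lemma rderiv_has:
  assumes "young_function F" "r > 0"
  shows "(F has_real_derivative rderiv F r) (at_right r)"
proof -
  have "((\<lambda>h. (F (h + r) - F r) / (h + r - r)) \<longlongrightarrow> rderiv F r) (at_right 0)"
    using rderiv_tendsto[OF assms] by (simp add: add.commute)
  then have "((\<lambda>y. (F y - F r) / (y - r)) \<longlongrightarrow> rderiv F r) (at_right r)"
    by (subst at_right_to_0) (simp add: filterlim_filtermap)
  then show ?thesis by (simp add: has_field_derivative_iff)
qed

lemma dini_aux: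
  fixes g :: "real \<Rightarrow> real"
  assumes su: "s \<le> u" and cont: "continuous_on {s..u} g"
    and der: "\<And>r. s \<le> r \<Longrightarrow> r < u \<Longrightarrow> \<exists>D. (g has_real_derivative D) (at_right r) \<and> D \<le> 0"
    and e: "e > 0"
  shows "g u \<le> g s + e * (u - s)"
proof -
  define S where "S = {s..u} \<inter> (\<lambda>r. g r - e * (r - s)) -` {..g s}"
  have cc: "continuous_on {s..u} (\<lambda>r. g r - e * (r - s))"
    by (intro continuous_intros cont)
  have cl: "closed S" unfolding S_def
    by (rule continuous_closed_preimage[OF cc]) auto
  have sS: "s \<in> S" using su by (simp add: S_def)
  have bdd: "bdd_above S" unfolding S_def by (rule bdd_aboveI[of _ u]) auto
  define c where "c = Sup S"
  have Sne: "S \<noteq> {}" using sS by blast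
  have cS: "c \<in> S" unfolding c_def by (rule closed_contains_Sup[OF Sne bdd cl])
  have cu: "c \<le> u" "s \<le> c" using cS by (auto simp: S_def)
  have "c = u"
  proof (rule ccontr)
    assume "c \<noteq> u"
    with cu have cu': "c < u" by simp
    obtain D where D: "(g has_real_derivative D) (at_right c)" "D \<le> 0" using der cu cu' by blast
    then have "((\<lambda>y. (g y - g c) / (y - c)) \<longlongrightarrow> D) (at_right c)"
      by (simp add: has_field_derivative_iff)
    moreover have "D < e" using D(2) e by simp
    ultimately have "eventually (\<lambda>y. (g y - g c) / (y - c) < e) (at_right c)"
      by (rule order_tendstoD(2))
    moreover have "eventually (\<lambda>y. y < u) (at_right c)"
      unfolding eventually_at_right_field using cu' by (intro exI[of _ u]) simp
    moreover have "eventually (\<lambda>y. y > c) (at_right c)"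
      by (simp add: eventually_at_filter)
    ultimately have "eventually (\<lambda>y. (g y - g c) / (y - c) < e \<and> y < u \<and> y > c) (at_right c)"
      by eventually_elim auto
    then have "\<exists>y. (g y - g c) / (y - c) < e \<and> y < u \<and> y > c"
      by (intro eventually_happens'[where F="at_right c"]) simp_all
    then obtain y where y: "(g y - g c) / (y - c) < e" "y < u" "y > c"
      by blast
    then have A1: "g y - g c < e * (y - c)" using y(3) by (simp add: divide_less_eq)
    have A2: "g c - e * (c - s) \<le> g s" using cS by (simp add: S_def)
    have A3: "e * (y - s) = e * (y - c) + e * (c - s)" by (simp add: algebra_simps)
    have "g y - e * (y - s) \<le> g s" using A1 A2 A3 by linarith
    moreover have "y \<in> {s..u}" using y cu by simp
    ultimately have "y \<in> S" unfolding S_def by simp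
    then have "y \<le> c" unfolding c_def using bdd by (rule cSup_upper)
    with y show False by simp
  qed
  with cS have "u \<in> S" by simp
  then have "g u - e * (u - s) \<le> g s" by (simp add: S_def)
  then show ?thesis by simp
qed

lemma dini:
  fixes g :: "real \<Rightarrow> real"
  assumes su: "s \<le> u" and cont: "continuous_on {s..u} g"
    and der: "\<And>r. s \<le> r \<Longrightarrow> r < u \<Longrightarrow> \<exists>D. (g has_real_derivative D) (at_right r) \<and> D \<le> 0"
  shows "g u \<le> g s"
proof -
  have eps: "g u \<le> g s + e" if "e > 0" for e
  proof (cases "s = u")
    case False
    with su have "u - s > 0" by simp
    have "g u \<le> g s + (e / (u - s)) * (u - s)"
      by (rule dini_aux[OF su cont der divide_pos_pos[OF that \<open>u - s > 0\<close>]])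
    then show ?thesis using \<open>u - s > 0\<close> by simp
  qed (use that in simp)
  show ?thesis by (rule field_le_epsilon[OF eps])
qed

lemma g_deriv:
  assumes "young_function F" "r > 0"
  shows "((\<lambda>x. F x * x powr (-P)) has_real_derivative
          r powr (-P-1) * (r * rderiv F r - P * F r)) (at_right r)"
proof -
  have "((\<lambda>x. F x * x powr (-P)) has_real_derivative
          rderiv F r * r powr (-P) + ((-P) * r powr (-P - 1)) * F r) (at_right r)"
  proof -
    have d1: "(F has_real_derivative rderiv F r) (at_right r)" by (rule rderiv_has[OF assms])
    have d2: "((\<lambda>x. x powr (-P)) has_real_derivative (-P) * r powr (-P - 1)) (at_right r)"
      by (rule has_field_derivative_at_within[OF has_real_derivative_powr[OF assms(2)]])
    show ?thesis by (rule DERIV_mult[OF d1 d2])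
  qed
  moreover have "r powr (-P) = r powr (-P-1) * r"
  proof -
    have "r powr (-P-1) * r = r powr (-P-1) * r powr 1" using assms(2) by simp
    also have "\<dots> = r powr (-P-1+1)" by (rule powr_add[symmetric])
    finally show ?thesis by simp
  qed
  ultimately show ?thesis by (simp add: algebra_simps)
qed

lemma ratio_le:
  assumes F: "young_function F" and s: "0 < s" "s \<le> u"
    and h: "\<And>r. s \<le> r \<Longrightarrow> r < u \<Longrightarrow> r * rderiv F r / F r \<le> P"
  shows "F u * u powr (-P) \<le> F s * s powr (-P)"
proof (rule dini[OF s(2)])
  show "continuous_on {s..u} (\<lambda>x. F x * x powr - P)"
    using s by (intro continuous_intros continuous_on_subset[OF young_cont[OF F]]) auto
  fix r assume r: "s \<le> r" "r < u"
  then have rp: "r > 0" "F r > 0" using s young_pos[OF F] by auto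
  have "r * rderiv F r \<le> P * F r" using h[OF r] rp by (simp add: divide_le_eq)
  then have "r powr (-P-1) * (r * rderiv F r - P * F r) \<le> 0"
    using rp by (intro mult_nonneg_nonpos) auto
  then show "\<exists>D. ((\<lambda>x. F x * x powr - P) has_real_derivative D) (at_right r) \<and> D \<le> 0"
    using g_deriv[OF F rp(1)] by blast
qed

lemma ratio_ge:
  assumes F: "young_function F" and s: "0 < s" "s \<le> u"
    and h: "\<And>r. s \<le> r \<Longrightarrow> r < u \<Longrightarrow> r * rderiv F r / F r \<ge> P"
  shows "F s * s powr (-P) \<le> F u * u powr (-P)"
proof -
  have "- (F u * u powr (-P)) \<le> - (F s * s powr (-P))"
  proof (rule dini[OF s(2), where g = "\<lambda>x. - (F x * x powr (-P))"])
    show "continuous_on {s..u} (\<lambda>x. - (F x * x powr - P))"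
      using s by (intro continuous_intros continuous_on_subset[OF young_cont[OF F]]) auto
    fix r assume r: "s \<le> r" "r < u"
    then have rp: "r > 0" "F r > 0" using s young_pos[OF F] by auto
    have "r * rderiv F r \<ge> P * F r" using h[OF r] rp by (simp add: le_divide_eq)
    then have "- (r powr (-P-1) * (r * rderiv F r - P * F r)) \<le> 0"
      using rp by simp
    then show "\<exists>D. ((\<lambda>x. - (F x * x powr - P)) has_real_derivative D) (at_right r) \<and> D \<le> 0"
      using DERIV_minus[OF g_deriv[OF F rp(1)]] by blast
  qed
  then show ?thesis by simp
qed

lemma quasi_mono:
  fixes R :: "real \<Rightarrow> real"
  assumes ab: "0 < a" "a \<le> b" and cont: "continuous_on {a..b} R"
    and pos: "\<And>x. x > 0 \<Longrightarrow> R x > 0"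
    and m1: "\<And>x y. 0 < x \<Longrightarrow> x \<le> y \<Longrightarrow> y \<le> a \<Longrightarrow> R y \<le> R x"
    and m2: "\<And>x y. b \<le> x \<Longrightarrow> x \<le> y \<Longrightarrow> R y \<le> R x"
  shows "\<exists>K\<ge>1. \<forall>u v. 0 < u \<longrightarrow> u \<le> v \<longrightarrow> R v \<le> K * R u"
proof -
  have ne: "{a..b} \<noteq> {}" using ab by simp
  obtain xM where xM: "xM \<in> {a..b}" "\<And>y. y \<in> {a..b} \<Longrightarrow> R y \<le> R xM"
    using continuous_attains_sup[OF compact_Icc ne cont] by blast
  obtain xm where xm: "xm \<in> {a..b}" "\<And>y. y \<in> {a..b} \<Longrightarrow> R xm \<le> R y"
    using continuous_attains_inf[OF compact_Icc ne cont] by blast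
  define M where "M = R xM"
  define m where "m = R xm"
  have mpos: "m > 0" using xm ab pos unfolding m_def by auto
  have mM: "m \<le> M" using xm xM unfolding m_def M_def by auto
  define K where "K = M / m"
  have K1: "K \<ge> 1" using mpos mM by (simp add: K_def)
  have mid: "R y \<le> K * R x" if "x \<in> {a..b}" "y \<in> {a..b}" for x y
  proof -
    have "R y \<le> M" using xM that unfolding M_def by auto
    also have "M = K * m" using mpos by (simp add: K_def)
    also have "K * m \<le> K * R x" using xm that K1 unfolding m_def by auto
    finally show ?thesis .
  qed
  have "R v \<le> K * R u" if uv: "0 < u" "u \<le> v" for u v
  proof -
    have Ru: "R u > 0" using pos uv by auto
    have triv: "R u \<le> K * R u" using K1 Ru by simp
    consider "v \<le> a" | "b \<le> u" | "a < v" "u < b" by linarith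
    then show ?thesis
    proof cases
      case 1 then show ?thesis using m1[OF uv] triv by linarith
    next
      case 2 then show ?thesis using m2[OF 2 uv(2)] triv by linarith
    next
      case 3
      define u' where "u' = max u a"
      define v' where "v' = min v b"
      have u'i: "u' \<in> {a..b}" "v' \<in> {a..b}" using 3 ab unfolding u'_def v'_def by auto
      have "R v \<le> R v'"
        by (cases "v \<le> b") (use m2[of b v] ab in \<open>auto simp: v'_def min_def\<close>)
      moreover have "R u' \<le> R u"
        by (cases "u \<le> a") (use m1[of u a] uv in \<open>auto simp: u'_def max_def\<close>)
      moreover have "R v' \<le> K * R u'" by (rule mid[OF u'i(1) u'i(2)])
      ultimately show ?thesis using K1 by (smt (verit) mult_left_mono)
    qed
  qed
  with K1 show ?thesis by blast
qed

lemma cor_le: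
  assumes F: "young_function F" and s: "0 < s" "s \<le> u"
    and h: "\<And>r. s \<le> r \<Longrightarrow> r < u \<Longrightarrow> r * rderiv F r / F r \<le> P"
  shows "F u \<le> F s * (u / s) powr P"
proof -
  have "F u * u powr (-P) \<le> F s * s powr (-P)" by (rule ratio_le[OF F s h])
  then have "F u * u powr (-P) * u powr P \<le> F s * s powr (-P) * u powr P"
    by (intro mult_right_mono) auto
  moreover have "u powr (-P) * u powr P = 1" using s by (simp add: powr_add[symmetric])
  moreover have "s powr (-P) * u powr P = (u / s) powr P"
    using s by (subst powr_divide) (auto simp: powr_minus field_simps)
  ultimately show ?thesis by (simp add: mult.assoc)
qed

lemma cor_ge:
  assumes F: "young_function F" and s: "0 < s" "s \<le> u"
    and h: "\<And>r. s \<le> r \<Longrightarrow> r < u \<Longrightarrow> r * rderiv F r / F r \<ge> P"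
  shows "F s * (u / s) powr P \<le> F u"
proof -
  have "F s * s powr (-P) \<le> F u * u powr (-P)" by (rule ratio_ge[OF F s h])
  then have "F s * s powr (-P) * u powr P \<le> F u * u powr (-P) * u powr P"
    by (intro mult_right_mono) auto
  moreover have "u powr (-P) * u powr P = 1" using s by (simp add: powr_add[symmetric])
  moreover have "s powr (-P) * u powr P = (u / s) powr P"
    using s by (subst powr_divide) (auto simp: powr_minus field_simps)
  ultimately show ?thesis by (simp add: mult.assoc)
qed

lemma ev0:
  fixes f :: "real \<Rightarrow> real" and p P :: real
  assumes "(f \<longlongrightarrow> p) (at_right (0::real))" "p < P"
  shows "\<exists>a>0. \<forall>r. 0 < r \<longrightarrow> r \<le> a \<longrightarrow> f r < P"
proof -
  have "eventually (\<lambda>r. f r < P) (at_right 0)" using order_tendstoD(2)[OF assms] .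
  then obtain b where b: "b > 0" "\<And>y. y > 0 \<Longrightarrow> y < b \<Longrightarrow> f y < P"
    unfolding eventually_at_right_field by auto
  show ?thesis by (rule exI[of _ "b/2"]) (use b in auto)
qed

lemma ev0':
  fixes f :: "real \<Rightarrow> real" and p P :: real
  assumes "(f \<longlongrightarrow> p) (at_right (0::real))" "p > P"
  shows "\<exists>a>0. \<forall>r. 0 < r \<longrightarrow> r \<le> a \<longrightarrow> f r > P"
proof -
  have "eventually (\<lambda>r. f r > P) (at_right 0)" using order_tendstoD(1)[OF assms] .
  then obtain b where b: "b > 0" "\<And>y. y > 0 \<Longrightarrow> y < b \<Longrightarrow> f y > P"
    unfolding eventually_at_right_field by auto
  show ?thesis by (rule exI[of _ "b/2"]) (use b in auto)
qed

lemma evinf: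
  fixes f :: "real \<Rightarrow> real" and p P :: real
  assumes "(f \<longlongrightarrow> p) at_top" "p < P"
  shows "\<exists>b>0. \<forall>r. b \<le> r \<longrightarrow> f r < P"
proof -
  have "eventually (\<lambda>r. f r < P) at_top" using order_tendstoD(2)[OF assms] .
  then obtain b where b: "\<And>y. y \<ge> b \<Longrightarrow> f y < P"
    unfolding eventually_at_top_linorder by auto
  show ?thesis by (rule exI[of _ "max b 1"]) (use b in auto)
qed

lemma evinf':
  fixes f :: "real \<Rightarrow> real" and p P :: real
  assumes "(f \<longlongrightarrow> p) at_top" "p > P"
  shows "\<exists>b>0. \<forall>r. b \<le> r \<longrightarrow> f r > P"
proof -
  have "eventually (\<lambda>r. f r > P) at_top" using order_tendstoD(1)[OF assms] .
  then obtain b where b: "\<And>y. y \<ge> b \<Longrightarrow> f y > P"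
    unfolding eventually_at_top_linorder by auto
  show ?thesis by (rule exI[of _ "max b 1"]) (use b in auto)
qed

lemma inv_aux:
  fixes a b K :: real
  assumes "inverse b \<le> K * inverse a" "0 < a" "0 < b"
  shows "a \<le> K * b"
proof -
  have "a * inverse b \<le> a * (K * inverse a)" using assms by (intro mult_left_mono) auto
  also have "\<dots> = K" using assms by simp
  finally have "a / b \<le> K" by (simp add: divide_inverse)
  then show ?thesis using assms by (simp add: pos_divide_le_eq)
qed

lemma upper_est:
  assumes F: "young_function F"
    and l0: "((\<lambda>t. t * rderiv F t / F t) \<longlongrightarrow> p0) (at_right 0)"
    and li: "((\<lambda>t. t * rderiv F t / F t) \<longlongrightarrow> pinf) at_top"
    and P: "max p0 pinf < P"
  shows "\<exists>K\<ge>1. \<forall>u v. 0 < u \<longrightarrow> u \<le> v \<longrightarrow> F v * v powr (-P) \<le> K * (F u * u powr (-P))"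
proof -
  obtain a where a: "a > 0" "\<And>r. 0 < r \<Longrightarrow> r \<le> a \<Longrightarrow> r * rderiv F r / F r < P"
    using ev0[OF l0, of P] P by auto
  obtain b0 where b0: "b0 > 0" "\<And>r. b0 \<le> r \<Longrightarrow> r * rderiv F r / F r < P"
    using evinf[OF li, of P] P by auto
  define b where "b = max b0 a"
  show ?thesis
  proof (rule quasi_mono)
    show "0 < a" "a \<le> b" using a by (auto simp: b_def)
    show "continuous_on {a..b} (\<lambda>x. F x * x powr - P)"
      using a by (intro continuous_intros continuous_on_subset[OF young_cont[OF F]]) auto
    show "F x * x powr - P > 0" if "x > 0" for x using young_pos[OF F that] that by simp
    show "F y * y powr - P \<le> F x * x powr - P" if "0 < x" "x \<le> y" "y \<le> a" for x y
    proof (rule ratio_le[OF F that(1,2)])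
      fix r assume "x \<le> r" "r < y"
      then show "r * rderiv F r / F r \<le> P" using that by (auto intro!: less_imp_le[OF a(2)])
    qed
    show "F y * y powr - P \<le> F x * x powr - P" if "b \<le> x" "x \<le> y" for x y
    proof (rule ratio_le[OF F _ that(2)])
      show "0 < x" using that a by (auto simp: b_def)
      fix r assume "x \<le> r" "r < y"
      then show "r * rderiv F r / F r \<le> P" using that by (auto intro!: less_imp_le[OF b0(2)] simp: b_def)
    qed
  qed
qed

lemma lower_est:
  assumes F: "young_function F"
    and l0: "((\<lambda>t. t * rderiv F t / F t) \<longlongrightarrow> p0) (at_right 0)"
    and li: "((\<lambda>t. t * rderiv F t / F t) \<longlongrightarrow> pinf) at_top"
    and Q: "Q < min p0 pinf"
  shows "\<exists>K\<ge>1. \<forall>u v. 0 < u \<longrightarrow> u \<le> v \<longrightarrow> F u * u powr (-Q) \<le> K * (F v * v powr (-Q))"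
proof -
  obtain a where a: "a > 0" "\<And>r. 0 < r \<Longrightarrow> r \<le> a \<Longrightarrow> r * rderiv F r / F r > Q"
    using ev0'[OF l0, of Q] Q by auto
  obtain b0 where b0: "b0 > 0" "\<And>r. b0 \<le> r \<Longrightarrow> r * rderiv F r / F r > Q"
    using evinf'[OF li, of Q] Q by auto
  define b where "b = max b0 a"
  have pos: "F x * x powr - Q > 0" if "x > 0" for x using young_pos[OF F that] that by simp
  have "\<exists>K\<ge>1. \<forall>u v. 0 < u \<longrightarrow> u \<le> v \<longrightarrow> inverse (F v * v powr (-Q)) \<le> K * inverse (F u * u powr (-Q))"
  proof (rule quasi_mono)
    show "0 < a" "a \<le> b" using a by (auto simp: b_def)
    have "continuous_on {a..b} (\<lambda>x. F x * x powr - Q)"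
      using a by (intro continuous_intros continuous_on_subset[OF young_cont[OF F]]) auto
    moreover have "\<forall>x\<in>{a..b}. F x * x powr - Q \<noteq> 0"
    proof
      fix x assume "x \<in> {a..b}"
      then have "x > 0" using a(1) by auto
      then show "F x * x powr - Q \<noteq> 0" using pos[of x] by (metis less_irrefl)
    qed
    ultimately show "continuous_on {a..b} (\<lambda>x. inverse (F x * x powr - Q))"
      by (rule continuous_on_inverse)
    show "inverse (F x * x powr - Q) > 0" if "x > 0" for x by (rule positive_imp_inverse_positive[OF pos[OF that]])
    show "inverse (F y * y powr - Q) \<le> inverse (F x * x powr - Q)" if "0 < x" "x \<le> y" "y \<le> a" for x y
    proof -
      have "F x * x powr - Q \<le> F y * y powr - Q"
      proof (rule ratio_ge[OF F that(1,2)])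
        fix r assume "x \<le> r" "r < y"
        then show "Q \<le> r * rderiv F r / F r" using that by (auto intro!: less_imp_le[OF a(2)])
      qed
      then show ?thesis by (rule le_imp_inverse_le[OF _ pos[OF that(1)]])
    qed
    show "inverse (F y * y powr - Q) \<le> inverse (F x * x powr - Q)" if "b \<le> x" "x \<le> y" for x y
    proof -
      have "F x * x powr - Q \<le> F y * y powr - Q"
      proof (rule ratio_ge[OF F _ that(2)])
        show "0 < x" using that a by (auto simp: b_def)
        fix r assume "x \<le> r" "r < y"
        then show "Q \<le> r * rderiv F r / F r" using that by (auto intro!: less_imp_le[OF b0(2)] simp: b_def)
      qed
      moreover have "x > 0" using that a by (auto simp: b_def)
      ultimately show ?thesis by (intro le_imp_inverse_le pos)
    qed
  qed
  then obtain K where K: "K \<ge> 1" "\<And>u v. 0 < u \<Longrightarrow> u \<le> v \<Longrightarrow> inverse (F v * v powr (-Q)) \<le> K * inverse (F u * u powr (-Q))"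
    by blast
  have "F u * u powr (-Q) \<le> K * (F v * v powr (-Q))" if "0 < u" "u \<le> v" for u v
  proof -
    have pu: "F u * u powr (-Q) > 0" using pos that by simp
    have pv: "F v * v powr (-Q) > 0" using pos that by simp
    have "inverse (F v * v powr (-Q)) \<le> K * inverse (F u * u powr (-Q))" using K(2) that by blast
    then show ?thesis using pu pv by (rule inv_aux)
  qed
  with K show ?thesis by blast
qed

lemma growth_ge:
  assumes F: "young_function F"
    and l0: "((\<lambda>t. t * rderiv F t / F t) \<longlongrightarrow> p0) (at_right 0)"
    and li: "((\<lambda>t. t * rderiv F t / F t) \<longlongrightarrow> pinf) at_top"
    and P: "P < max p0 pinf" and lam: "lam \<ge> 1"
  shows "\<exists>t>0. F t * lam powr P \<le> F (lam * t)"
proof (cases "P < pinf")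
  case True
  obtain b where b: "b > 0" "\<And>r. b \<le> r \<Longrightarrow> r * rderiv F r / F r > P"
    using evinf'[OF li True] by auto
  have blb: "b \<le> lam * b" using mult_right_mono[of 1 lam b] lam b by simp
  have "F b * ((lam * b) / b) powr P \<le> F (lam * b)"
  proof (rule cor_ge[OF F b(1) blb])
    fix r assume r: "b \<le> r" "r < lam * b"
    show "P \<le> r * rderiv F r / F r" by (rule less_imp_le[OF b(2)[OF r(1)]])
  qed
  moreover have "(lam * b) / b = lam" using b by simp
  ultimately have "F b * lam powr P \<le> F (lam * b)" by simp
  then show ?thesis using b(1) by blast
next
  case False
  then have "P < p0" using P by simp
  obtain a where a: "a > 0" "\<And>r. 0 < r \<Longrightarrow> r \<le> a \<Longrightarrow> r * rderiv F r / F r > P"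
    using ev0'[OF l0 \<open>P < p0\<close>] by auto
  have alp: "a / lam > 0" "a / lam \<le> a" using a lam by (simp_all add: divide_le_eq mult_le_cancel_left1)
  have "F (a / lam) * (a / (a / lam)) powr P \<le> F a"
  proof (rule cor_ge[OF F alp])
    fix r assume r: "a / lam \<le> r" "r < a"
    show "P \<le> r * rderiv F r / F r" by (rule less_imp_le[OF a(2)]) (use r alp in linarith)+
  qed
  moreover have "a / (a / lam) = lam" "lam * (a / lam) = a" using a lam by simp_all
  ultimately have "F (a / lam) * lam powr P \<le> F (lam * (a / lam))" by simp
  then show ?thesis using alp(1) by blast
qed

lemma growth_le:
  assumes F: "young_function F"
    and l0: "((\<lambda>t. t * rderiv F t / F t) \<longlongrightarrow> p0) (at_right 0)"
    and li: "((\<lambda>t. t * rderiv F t / F t) \<longlongrightarrow> pinf) at_top"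
    and P: "P > min p0 pinf" and lam: "lam \<ge> 1"
  shows "\<exists>t>0. F (lam * t) \<le> F t * lam powr P"
proof (cases "P > pinf")
  case True
  obtain b where b: "b > 0" "\<And>r. b \<le> r \<Longrightarrow> r * rderiv F r / F r < P"
    using evinf[OF li True] by auto
  have blb: "b \<le> lam * b" using mult_right_mono[of 1 lam b] lam b by simp
  have "F (lam * b) \<le> F b * ((lam * b) / b) powr P"
  proof (rule cor_le[OF F b(1) blb])
    fix r assume r: "b \<le> r" "r < lam * b"
    show "r * rderiv F r / F r \<le> P" by (rule less_imp_le[OF b(2)[OF r(1)]])
  qed
  moreover have "(lam * b) / b = lam" using b by simp
  ultimately have "F (lam * b) \<le> F b * lam powr P" by simp
  then show ?thesis using b(1) by blast
next
  case False
  then have "P > p0" using P by simp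
  obtain a where a: "a > 0" "\<And>r. 0 < r \<Longrightarrow> r \<le> a \<Longrightarrow> r * rderiv F r / F r < P"
    using ev0[OF l0 \<open>P > p0\<close>] by auto
  have alp: "a / lam > 0" "a / lam \<le> a" using a lam by (simp_all add: divide_le_eq mult_le_cancel_left1)
  have "F a \<le> F (a / lam) * (a / (a / lam)) powr P"
  proof (rule cor_le[OF F alp])
    fix r assume r: "a / lam \<le> r" "r < a"
    show "r * rderiv F r / F r \<le> P" by (rule less_imp_le[OF a(2)]) (use r alp in linarith)+
  qed
  moreover have "a / (a / lam) = lam" "lam * (a / lam) = a" using a lam by simp_all
  ultimately have "F (lam * (a / lam)) \<le> F (a / lam) * lam powr P" by simp
  then show ?thesis using alp(1) by blast
qed

lemma sup_young:
  fixes F :: "real \<Rightarrow> real" and L :: "real set"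
  assumes F: "young_function F" and L: "L \<subseteq> {0<..}" "1 \<in> L" and K: "K \<ge> 1"
    and bnd: "\<And>t l. t \<ge> 0 \<Longrightarrow> l \<in> L \<Longrightarrow> F (l * t) / l powr R \<le> K * F t"
  defines "G \<equiv> \<lambda>t. SUP l\<in>L. F (l * t) / l powr R"
  shows "young_function G" "young_equiv F G"
    "\<And>t. t \<ge> 0 \<Longrightarrow> bdd_above ((\<lambda>l. F (l * t) / l powr R) ` L)"
    "\<And>t. t \<ge> 0 \<Longrightarrow> F t \<le> G t" "\<And>t. t \<ge> 0 \<Longrightarrow> G t \<le> K * F t"
proof -
  have Fy: "convex_on {0..} F" "\<And>t. t \<ge> 0 \<Longrightarrow> F t \<ge> 0" "F 0 = 0" "\<And>t. t > 0 \<Longrightarrow> F t > 0"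
    "filterlim F at_top at_top" using F by (auto simp: young_function_def)
  have Lne: "L \<noteq> {}" using L by auto
  show bdd: "bdd_above ((\<lambda>l. F (l * t) / l powr R) ` L)" if "t \<ge> 0" for t
    using bnd[OF that] by (intro bdd_aboveI2) auto
  show ge: "F t \<le> G t" if "t \<ge> 0" for t
    using cSUP_upper[OF L(2) bdd[OF that]] by (simp add: G_def)
  show le: "G t \<le> K * F t" if "t \<ge> 0" for t
    unfolding G_def by (rule cSUP_least[OF Lne]) (use bnd that in auto)
  have G0: "\<And>t. t \<ge> 0 \<Longrightarrow> G t \<ge> 0" using ge Fy(2) by (meson order_trans)
  have cvx: "convex_on {0..} G"
  proof (rule convex_onI)
    fix t x y :: real assume t: "0 < t" "t < 1" and xy: "x \<in> {0..}" "y \<in> {0..}"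
    show "G ((1 - t) *\<^sub>R x + t *\<^sub>R y) \<le> (1 - t) * G x + t * G y"
      unfolding G_def
    proof (rule cSUP_least[OF Lne])
      fix l assume l: "l \<in> L"
      then have lp: "l > 0" using L by auto
      have "F (l * ((1 - t) *\<^sub>R x + t *\<^sub>R y)) = F ((1 - t) *\<^sub>R (l * x) + t *\<^sub>R (l * y))"
        by (simp add: algebra_simps)
      also have "\<dots> \<le> (1 - t) * F (l * x) + t * F (l * y)"
        by (rule convex_onD[OF Fy(1)]) (use t xy lp in auto)
      finally have "F (l * ((1 - t) *\<^sub>R x + t *\<^sub>R y)) / l powr R \<le>
          ((1 - t) * F (l * x) + t * F (l * y)) / l powr R"
        using lp by (intro divide_right_mono) auto
      also have "\<dots> = (1 - t) * (F (l * x) / l powr R) + t * (F (l * y) / l powr R)"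
        by (simp add: add_divide_distrib)
      also have "\<dots> \<le> (1 - t) * (SUP l\<in>L. F (l * x) / l powr R) + t * (SUP l\<in>L. F (l * y) / l powr R)"
        using t xy l by (intro add_mono mult_left_mono cSUP_upper bdd) auto
      finally show "F (l * ((1 - t) *\<^sub>R x + t *\<^sub>R y)) / l powr R \<le>
          (1 - t) * (SUP l\<in>L. F (l * x) / l powr R) + t * (SUP l\<in>L. F (l * y) / l powr R)" .
    qed
  qed simp
  have G00: "G 0 = 0" using le[of 0] G0[of 0] Fy(3) by simp
  have "filterlim G at_top at_top"
    by (rule filterlim_at_top_mono[OF Fy(5)]) (use ge in \<open>auto simp: eventually_at_top_linorder\<close>)
  moreover have "G t > 0" if "t > 0" for t
    using ge[of t] Fy(4)[OF that] that by linarith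
  ultimately show GY: "young_function G"
    unfolding young_function_def using cvx G0 G00 by auto
  show "young_equiv F G"
    unfolding young_equiv_def
  proof (intro conjI F GY exI[of _ K] allI impI)
    fix t :: real assume t: "t \<ge> 0"
    show "G t / K \<le> F t" using le[OF t] K by (simp add: divide_le_eq mult.commute)
    have "F t \<le> G t" by (rule ge[OF t])
    also have "\<dots> \<le> K * G t" using G0[OF t] K by (simp add: mult_le_cancel_right1)
    finally show "F t \<le> K * G t" .
  qed (use K in auto)
qed

lemma deriv_sign_le:
  assumes "(g has_real_derivative D) (at_right r)" "\<And>y. y > r \<Longrightarrow> g y \<le> g r"
  shows "D \<le> 0"
proof -
  have lim: "((\<lambda>y. (g y - g r) / (y - r)) \<longlongrightarrow> D) (at_right r)"
    using assms(1) by (simp add: has_field_derivative_iff)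
  have "eventually (\<lambda>y. y > r) (at_right r)" by (simp add: eventually_at_filter)
  then have "eventually (\<lambda>y. (g y - g r) / (y - r) \<le> 0) (at_right r)"
    by eventually_elim (use assms(2) in \<open>auto intro: divide_nonpos_pos\<close>)
  then show ?thesis using tendsto_upperbound[OF lim] by auto
qed

lemma deriv_sign_ge:
  assumes "(g has_real_derivative D) (at_right r)" "\<And>y. y > r \<Longrightarrow> g y \<ge> g r"
  shows "D \<ge> 0"
proof -
  have lim: "((\<lambda>y. (g y - g r) / (y - r)) \<longlongrightarrow> D) (at_right r)"
    using assms(1) by (simp add: has_field_derivative_iff)
  have "eventually (\<lambda>y. y > r) (at_right r)" by (simp add: eventually_at_filter)
  then have "eventually (\<lambda>y. (g y - g r) / (y - r) \<ge> 0) (at_right r)"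
    by eventually_elim (use assms(2) in \<open>auto intro: divide_nonneg_pos\<close>)
  then show ?thesis using tendsto_lowerbound[OF lim] by auto
qed

lemma powr_split:
  fixes F :: "real \<Rightarrow> real" and l y t P :: real
  assumes "l > 0" "y > 0" "t > 0"
  shows "F (l * y) / l powr P = F ((l * y / t) * t) / (l * y / t) powr P * (y / t) powr P"
proof -
  have "(l * y / t) powr P = (l * (y / t)) powr P" by (simp only: times_divide_eq_right)
  also have "\<dots> = l powr P * (y / t) powr P" by (rule powr_mult)
  finally have "(l * y / t) powr P = l powr P * (y / t) powr P" .
  moreover have "(l * y / t) * t = l * y" using assms by simp
  moreover have "(y / t) powr P > 0" "l powr P > 0" using assms by auto
  ultimately show ?thesis by (simp add: field_simps)
qed

lemma powr_cancel2:
  fixes y t P :: real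
  assumes "y > 0" "t > 0"
  shows "(y / t) powr P * y powr (-P) = t powr (-P)"
proof -
  have "(y / t) powr P = y powr P / t powr P" by (rule powr_divide)
  then show ?thesis using assms by (simp add: powr_minus field_simps)
qed

lemma up_exists:
  assumes F: "young_function F"
    and l0: "((\<lambda>t. t * rderiv F t / F t) \<longlongrightarrow> p0) (at_right 0)"
    and li: "((\<lambda>t. t * rderiv F t / F t) \<longlongrightarrow> pinf) at_top"
    and P: "max p0 pinf < P"
  shows "\<exists>G. young_equiv F G \<and> upper_index G \<le> ereal P"
proof -
  obtain K where K: "K \<ge> 1" "\<And>u v. 0 < u \<Longrightarrow> u \<le> v \<Longrightarrow> F v * v powr (-P) \<le> K * (F u * u powr (-P))"
    using upper_est[OF F l0 li P] by blast
  have bnd: "F (l * t) / l powr P \<le> K * F t" if t: "t \<ge> 0" and l: "l \<in> {1..}" for t l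
  proof (cases "t = 0")
    case True then show ?thesis using F by (simp add: young_function_def)
  next
    case False
    then have tp: "t > 0" using t by simp
    have lp: "l > 0" using l by auto
    have "F (l * t) * (l * t) powr (-P) \<le> K * (F t * t powr (-P))"
      using K(2)[OF tp] l tp by auto
    then have "F (l * t) * l powr (-P) * t powr (-P) \<le> K * F t * t powr (-P)"
      using lp tp by (simp add: powr_mult mult.assoc)
    then have "F (l * t) * l powr (-P) \<le> K * F t" using tp by simp
    then show ?thesis by (simp add: powr_minus divide_inverse)
  qed
  define G where "G = (\<lambda>t. SUP l\<in>{1..}. F (l * t) / l powr P)"
  have L: "{1..} \<subseteq> ({0<..} :: real set)" "(1::real) \<in> {1..}" by auto
  note SY = sup_young[OF F L K(1) bnd, folded G_def]
  have GY: "young_function G" by (rule SY(1))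
  have "ereal (t * rderiv G t / G t) \<le> ereal P" if t: "t > 0" for t
  proof -
    have mono: "G y * y powr (-P) \<le> G t * t powr (-P)" if y: "y > t" for y
    proof -
      have yp: "y > 0" using t y by simp
      have "G y \<le> G t * (y / t) powr P"
        unfolding G_def
      proof (rule cSUP_least)
        fix l :: real assume l: "l \<in> {1..}"
        then have lp: "l > 0" by auto
        have "1 * y \<le> l * y" by (rule mult_right_mono) (use l y t in auto)
        then have "t \<le> l * y" using y by simp
        then have "l * y / t \<ge> 1" using t by (simp add: le_divide_eq)
        then have "F ((l * y / t) * t) / (l * y / t) powr P \<le> (SUP l\<in>{1..}. F (l * t) / l powr P)"
          using SY(3)[of t] t by (intro cSUP_upper) auto
        then have "F ((l * y / t) * t) / (l * y / t) powr P * (y / t) powr P \<le>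
            (SUP l\<in>{1..}. F (l * t) / l powr P) * (y / t) powr P"
          by (intro mult_right_mono) auto
        then show "F (l * y) / l powr P \<le> (SUP l\<in>{1..}. F (l * t) / l powr P) * (y / t) powr P"
          using powr_split[OF lp yp t, of F P] by simp
      qed auto
      then have "G y * y powr (-P) \<le> G t * (y / t) powr P * y powr (-P)"
        by (intro mult_right_mono) auto
      then show ?thesis using powr_cancel2[OF yp t, of P] by (simp add: mult.assoc)
    qed
    have "t powr (-P-1) * (t * rderiv G t - P * G t) \<le> 0"
      by (rule deriv_sign_le[OF g_deriv[OF GY t]]) (use mono in auto)
    then have "t * rderiv G t - P * G t \<le> 0" using t by (simp add: mult_le_0_iff)
    moreover have "G t > 0" using GY t by (rule young_pos)
    ultimately show ?thesis by (simp add: divide_le_eq)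
  qed
  then have "upper_index G \<le> ereal P" unfolding upper_index_def by (intro SUP_least) auto
  with SY(2) show ?thesis by blast
qed

lemma lo_exists:
  assumes F: "young_function F"
    and l0: "((\<lambda>t. t * rderiv F t / F t) \<longlongrightarrow> p0) (at_right 0)"
    and li: "((\<lambda>t. t * rderiv F t / F t) \<longlongrightarrow> pinf) at_top"
    and Q: "Q < min p0 pinf"
  shows "\<exists>G. young_equiv F G \<and> ereal Q \<le> lower_index G"
proof -
  obtain K where K: "K \<ge> 1" "\<And>u v. 0 < u \<Longrightarrow> u \<le> v \<Longrightarrow> F u * u powr (-Q) \<le> K * (F v * v powr (-Q))"
    using lower_est[OF F l0 li Q] by blast
  have bnd: "F (l * t) / l powr Q \<le> K * F t" if t: "t \<ge> 0" and l: "l \<in> {0<..1}" for t l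
  proof (cases "t = 0")
    case True then show ?thesis using F by (simp add: young_function_def)
  next
    case False
    then have tp: "t > 0" using t by simp
    have lp: "l > 0" using l by auto
    have "l * t \<le> t" using l tp by (simp add: mult_le_cancel_right1)
    then have "F (l * t) * (l * t) powr (-Q) \<le> K * (F t * t powr (-Q))"
      using K(2)[of "l * t" t] lp tp by auto
    then have "F (l * t) * l powr (-Q) * t powr (-Q) \<le> K * F t * t powr (-Q)"
      using lp tp by (simp add: powr_mult mult.assoc)
    then have "F (l * t) * l powr (-Q) \<le> K * F t" using tp by simp
    then show ?thesis by (simp add: powr_minus divide_inverse)
  qed
  define G where "G = (\<lambda>t. SUP l\<in>{0<..1}. F (l * t) / l powr Q)"
  have L: "{0<..1} \<subseteq> ({0<..} :: real set)" "(1::real) \<in> {0<..1}" by auto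
  note SY = sup_young[OF F L K(1) bnd, folded G_def]
  have GY: "young_function G" by (rule SY(1))
  have "ereal Q \<le> ereal (t * rderiv G t / G t)" if t: "t > 0" for t
  proof -
    have mono: "G t * t powr (-Q) \<le> G y * y powr (-Q)" if y: "y > t" for y
    proof -
      have yp: "y > 0" using t y by simp
      have "G t \<le> G y * (t / y) powr Q"
        unfolding G_def
      proof (rule cSUP_least)
        fix l :: real assume l: "l \<in> {0<..1}"
        then have lp: "l > 0" by auto
        have "l * t \<le> 1 * t" by (rule mult_right_mono) (use l y t in auto)
        then have "l * t \<le> y" using y by simp
        then have "l * t / y \<le> 1" using yp by (simp add: divide_le_eq)
        moreover have "l * t / y > 0" using lp t yp by simp
        ultimately have "F ((l * t / y) * y) / (l * t / y) powr Q \<le> (SUP l\<in>{0<..1}. F (l * y) / l powr Q)"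
          using SY(3)[of y] yp by (intro cSUP_upper) auto
        then have "F ((l * t / y) * y) / (l * t / y) powr Q * (t / y) powr Q \<le>
            (SUP l\<in>{0<..1}. F (l * y) / l powr Q) * (t / y) powr Q"
          by (intro mult_right_mono) auto
        then show "F (l * t) / l powr Q \<le> (SUP l\<in>{0<..1}. F (l * y) / l powr Q) * (t / y) powr Q"
          using powr_split[OF lp t yp, of F Q] by simp
      qed auto
      then have "G t * t powr (-Q) \<le> G y * (t / y) powr Q * t powr (-Q)"
        by (intro mult_right_mono) auto
      then show ?thesis using powr_cancel2[OF t yp, of Q] by (simp add: mult.assoc)
    qed
    have "t powr (-Q-1) * (t * rderiv G t - Q * G t) \<ge> 0"
      by (rule deriv_sign_ge[OF g_deriv[OF GY t]]) (use mono in auto)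
    then have "t * rderiv G t - Q * G t \<ge> 0" using t by (simp add: zero_le_mult_iff)
    moreover have "G t > 0" using GY t by (rule young_pos)
    ultimately show ?thesis by (simp add: le_divide_eq)
  qed
  then have "ereal Q \<le> lower_index G" unfolding lower_index_def by (intro INF_greatest) auto
  with SY(2) show ?thesis by blast
qed

lemma lam_facts:
  fixes C e :: real
  assumes "C \<ge> 1" "e > 0"
  defines "lam \<equiv> (2 * C^2) powr (1 / e)"
  shows "lam \<ge> 1" "lam powr e = 2 * C^2" "lam > 0"
proof -
  have "1 \<le> C^2" using assms(1) by (rule one_le_power)
  then have c: "2 * C^2 \<ge> 1" by simp
  show "lam \<ge> 1" unfolding lam_def using c assms(2) by (intro ge_one_powr_ge_zero) auto
  then show "lam > 0" by simp
  show "lam powr e = 2 * C^2" unfolding lam_def using assms(2) c by (simp add: powr_powr)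
qed

lemma class_upper_ge:
  assumes F: "young_function F"
    and l0: "((\<lambda>t. t * rderiv F t / F t) \<longlongrightarrow> p0) (at_right 0)"
    and li: "((\<lambda>t. t * rderiv F t / F t) \<longlongrightarrow> pinf) at_top"
    and eq: "young_equiv F G"
  shows "ereal (max p0 pinf) \<le> upper_index G"
proof (rule ccontr)
  assume "\<not> ereal (max p0 pinf) \<le> upper_index G"
  then have "upper_index G < ereal (max p0 pinf)" by (simp only: not_le)
  then obtain U where U: "upper_index G < ereal U" "ereal U < ereal (max p0 pinf)"
    using ereal_dense2 by blast
  have UM: "U < max p0 pinf" using U(2) by (simp only: less_ereal.simps)
  have GY: "young_function G" using eq by (simp add: young_equiv_def)
  obtain C where C: "C \<ge> 1" "\<And>t. t \<ge> 0 \<Longrightarrow> G t / C \<le> F t \<and> F t \<le> C * G t"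
    using eq unfolding young_equiv_def by blast
  have hG: "t * rderiv G t / G t \<le> U" if "t > 0" for t
  proof -
    have "ereal (t * rderiv G t / G t) \<le> upper_index G"
      unfolding upper_index_def using that by (intro SUP_upper) auto
    then have "ereal (t * rderiv G t / G t) < ereal U" using U(1) by (rule le_less_trans)
    then have "t * rderiv G t / G t < U" by (simp only: less_ereal.simps)
    then show ?thesis by simp
  qed
  define P2 where "P2 = (U + max p0 pinf) / 2"
  have P2: "P2 < max p0 pinf" "U < P2" using UM by (auto simp: P2_def)
  define e where "e = P2 - U"
  have e: "e > 0" using P2 by (simp add: e_def)
  define lam where "lam = (2 * C^2) powr (1 / e)"
  note LF = lam_facts[OF C(1) e, folded lam_def]
  obtain t where t: "t > 0" "F t * lam powr P2 \<le> F (lam * t)"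
    using growth_ge[OF F l0 li P2(1) LF(1)] by blast
  have lt: "t \<le> lam * t" using t LF by simp
  have "G (lam * t) \<le> G t * ((lam * t) / t) powr U"
    by (rule cor_le[OF GY t(1) lt]) (use hG t in \<open>auto\<close>)
  then have G1: "G (lam * t) \<le> G t * lam powr U" using t by simp
  have "F t * lam powr P2 \<le> C * G (lam * t)" using t C(2)[of "lam * t"] LF by auto
  also have "\<dots> \<le> C * (G t * lam powr U)" using G1 C by (intro mult_left_mono) auto
  also have "\<dots> \<le> C * (C * F t * lam powr U)"
  proof -
    have "G t / C \<le> F t" using C(2)[of t] t by auto
    then have "G t \<le> C * F t" using C by (simp add: divide_le_eq mult.commute)
    then show ?thesis using C by (intro mult_left_mono mult_right_mono) auto
  qed
  finally have A: "F t * lam powr P2 \<le> C^2 * F t * lam powr U" by (simp add: power2_eq_square mult.assoc)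
  have "lam powr P2 = lam powr e * lam powr U" by (simp add: e_def powr_add[symmetric])
  then have "F t * lam powr P2 = 2 * (C^2 * F t * lam powr U)" using LF by simp
  moreover have "C^2 * F t * lam powr U > 0" using young_pos[OF F t(1)] C LF by simp
  ultimately show False using A by linarith
qed

lemma class_lower_le:
  assumes F: "young_function F"
    and l0: "((\<lambda>t. t * rderiv F t / F t) \<longlongrightarrow> p0) (at_right 0)"
    and li: "((\<lambda>t. t * rderiv F t / F t) \<longlongrightarrow> pinf) at_top"
    and eq: "young_equiv F G"
  shows "lower_index G \<le> ereal (min p0 pinf)"
proof (rule ccontr)
  assume "\<not> lower_index G \<le> ereal (min p0 pinf)"
  then have "ereal (min p0 pinf) < lower_index G" by (simp only: not_le)
  then obtain L where L: "ereal (min p0 pinf) < ereal L" "ereal L < lower_index G"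
    using ereal_dense2 by blast
  have LM: "min p0 pinf < L" using L(1) by (simp only: less_ereal.simps)
  have GY: "young_function G" using eq by (simp add: young_equiv_def)
  obtain C where C: "C \<ge> 1" "\<And>t. t \<ge> 0 \<Longrightarrow> G t / C \<le> F t \<and> F t \<le> C * G t"
    using eq unfolding young_equiv_def by blast
  have hG: "L \<le> t * rderiv G t / G t" if "t > 0" for t
  proof -
    have "lower_index G \<le> ereal (t * rderiv G t / G t)"
      unfolding lower_index_def using that by (intro INF_lower) auto
    with L(2) have "ereal L < ereal (t * rderiv G t / G t)" by (rule less_le_trans)
    then have "L < t * rderiv G t / G t" by (simp only: less_ereal.simps)
    then show ?thesis by simp
  qed
  define P2 where "P2 = (L + min p0 pinf) / 2"
  have P2: "min p0 pinf < P2" "P2 < L" using LM by (auto simp: P2_def)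
  define e where "e = L - P2"
  have e: "e > 0" using P2 by (simp add: e_def)
  define lam where "lam = (2 * C^2) powr (1 / e)"
  note LF = lam_facts[OF C(1) e, folded lam_def]
  obtain t where t: "t > 0" "F (lam * t) \<le> F t * lam powr P2"
    using growth_le[OF F l0 li P2(1) LF(1)] by blast
  have lt: "t \<le> lam * t" using t LF by simp
  have "G t * ((lam * t) / t) powr L \<le> G (lam * t)"
    by (rule cor_ge[OF GY t(1) lt]) (use hG t in \<open>auto\<close>)
  then have G1: "G t * lam powr L \<le> G (lam * t)" using t by simp
  have Gle: "G (lam * t) \<le> C * F (lam * t)"
  proof -
    have "G (lam * t) / C \<le> F (lam * t)" using C(2)[of "lam * t"] t LF by auto
    then show ?thesis using C by (simp add: divide_le_eq mult.commute)
  qed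
  have "G t * lam powr L \<le> C * F (lam * t)" using G1 Gle by simp
  also have "\<dots> \<le> C * (F t * lam powr P2)" using t C by (intro mult_left_mono) auto
  also have "\<dots> \<le> C * (C * G t * lam powr P2)"
  proof -
    have "F t \<le> C * G t" using C(2)[of t] t by auto
    then show ?thesis using C by (intro mult_left_mono mult_right_mono) auto
  qed
  finally have A: "G t * lam powr L \<le> C^2 * G t * lam powr P2" by (simp add: power2_eq_square mult.assoc)
  have "lam powr L = lam powr e * lam powr P2" by (simp add: e_def powr_add[symmetric])
  then have "G t * lam powr L = 2 * (C^2 * G t * lam powr P2)" using LF by simp
  moreover have "C^2 * G t * lam powr P2 > 0" using young_pos[OF GY t(1)] C LF by simp
  ultimately show False using A by linarith
qed

theorem mainTheorem12:
  fixes \<Phi> :: "real \<Rightarrow> real" and p0 pinf :: real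
  assumes "young_function \<Phi>"
    and "((\<lambda>t. t * rderiv \<Phi> t / \<Phi> t) \<longlongrightarrow> p0) (at_right 0)"
    and "((\<lambda>t. t * rderiv \<Phi> t / \<Phi> t) \<longlongrightarrow> pinf) at_top"
  shows "upper_index_class \<Phi> = ereal (max p0 pinf)
       \<and> lower_index_class \<Phi> = ereal (min p0 pinf)"
proof
  show "upper_index_class \<Phi> = ereal (max p0 pinf)"
  proof (rule antisym)
    show "ereal (max p0 pinf) \<le> upper_index_class \<Phi>"
      unfolding upper_index_class_def young_class_def
      by (intro INF_greatest class_upper_ge[OF assms]) auto
    show "upper_index_class \<Phi> \<le> ereal (max p0 pinf)"
    proof (rule ereal_le_epsilon2)
      fix e :: real assume e: "e > 0"
      have "max p0 pinf < max p0 pinf + e" using e by simp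
      then obtain G where G: "young_equiv \<Phi> G" "upper_index G \<le> ereal (max p0 pinf + e)"
        using up_exists[OF assms] by blast
      have "upper_index_class \<Phi> \<le> upper_index G"
        unfolding upper_index_class_def young_class_def using G(1) by (intro INF_lower) auto
      then have "upper_index_class \<Phi> \<le> ereal (max p0 pinf + e)" using G(2) by (rule order_trans)
      then show "upper_index_class \<Phi> \<le> ereal (max p0 pinf) + ereal e" by (metis plus_ereal.simps(1))
    qed
  qed
  show "lower_index_class \<Phi> = ereal (min p0 pinf)"
  proof (rule antisym)
    show "lower_index_class \<Phi> \<le> ereal (min p0 pinf)"
      unfolding lower_index_class_def young_class_def
      by (intro SUP_least class_lower_le[OF assms]) auto
    show "ereal (min p0 pinf) \<le> lower_index_class \<Phi>"
    proof (rule ereal_le_epsilon2)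
      fix e :: real assume e: "e > 0"
      have "min p0 pinf - e < min p0 pinf" using e by (auto simp: min_def)
      then obtain G where G: "young_equiv \<Phi> G" "ereal (min p0 pinf - e) \<le> lower_index G"
        using lo_exists[OF assms] by blast
      have "lower_index G \<le> lower_index_class \<Phi>"
        unfolding lower_index_class_def young_class_def using G(1) by (intro SUP_upper) auto
      with G(2) have "ereal (min p0 pinf - e) \<le> lower_index_class \<Phi>" by (rule order_trans)
      then have "ereal (min p0 pinf - e) + ereal e \<le> lower_index_class \<Phi> + ereal e"
        by (rule add_right_mono)
      moreover have "ereal (min p0 pinf - e) + ereal e = ereal (min p0 pinf)" by simp
      ultimately show "ereal (min p0 pinf) \<le> lower_index_class \<Phi> + ereal e" by simp
    qed
  qed
qed

end
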